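(* Let $(V,\|\cdot\|_V)$ be a separable real Banach space, let $(\Omega,\mathcal F,\mathbb P)$ be a probability space, let $A\colon D(A)\subseteq V\to V$ be the generator of a strongly continuous semigroup $(e^{tA})_{t\ge0}$, let $O\colon[0,T]\times\Omega\to V$ be a stochastic process, and let $T,h\in(0,\infty)$, $Y\colon[0,T]\times\Omega\to V$ a mapping, and $F\colon V^2\to V$ a $\mathcal B(V^2)/\mathcal B(V)$-measurable function satisfy for all $t\in[0,T]$ (and all $\omega\in\Omega$) that $Y_t=\int_0^te^{(t-s)A}F(Y_{\lfloor s\rfloor_h},O_{\lfloor s\rfloor_h})\,ds+O_t$. Then $Y\colon[0,T]\times\Omega\to V$ is a stochastic process and $Y-O\colon[0,T]\times\Omega\to V$ is a stochastic process with right-continuous sample paths.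
   Context: For $h>0$, $\lfloor t\rfloor_h=\max((-\infty,t]\cap\{0,h,-h,2h,-2h,\dots\})$. A stochastic process is a mapping $Z\colon[0,T]\times\Omega\to V$ such that each $Z_t$ is $\mathcal F/\mathcal B(V)$-measurable. *)

theory Defs
  imports "HOL-Analysis.Analysis" "HOL-Probability.Probability"
begin

definition floorh :: "real \<Rightarrow> real \<Rightarrow> real" where
  "floorh h t = (GREATEST x. x \<le> t \<and> (\<exists>k::int. x = of_int k * h))"

definition C0_semigroup :: "(real \<Rightarrow> 'v::real_normed_vector \<Rightarrow> 'v) \<Rightarrow> bool" where
  "C0_semigroup S \<longleftrightarrow>
     (\<forall>t\<ge>0. bounded_linear (S t)) \<and>
     S 0 = id \<and>
     (\<forall>s\<ge>0. \<forall>t\<ge>0. S (s + t) = S s \<circ> S t) \<and>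
     (\<forall>x. ((\<lambda>t. S t x) \<longlongrightarrow> x) (at_right 0))"

definition stoch_process ::
  "'a measure \<Rightarrow> real \<Rightarrow> (real \<Rightarrow> 'a \<Rightarrow> 'v::topological_space) \<Rightarrow> bool" where
  "stoch_process M T Z \<longleftrightarrow> (\<forall>t\<in>{0..T}. Z t \<in> borel_measurable M)"

end

theory Submission
  imports Defs
begin

lemma floorh_eq:
  assumes "h > 0" shows "floorh h s = of_int \<lfloor>s/h\<rfloor> * h"
  unfolding floorh_def
proof (rule Greatest_equality)
  show "of_int \<lfloor>s/h\<rfloor> * h \<le> s \<and> (\<exists>k::int. of_int \<lfloor>s/h\<rfloor> * h = of_int k * h)"
    using assms by (auto simp: pos_le_divide_eq[symmetric])
  fix y assume "y \<le> s \<and> (\<exists>k::int. y = of_int k * h)"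
  then obtain k :: int where y: "y = of_int k * h" "y \<le> s" by auto
  then have "of_int k \<le> s / h" using assms by (simp add: pos_le_divide_eq)
  then have "k \<le> \<lfloor>s/h\<rfloor>" by (simp add: le_floor_iff)
  then show "y \<le> of_int \<lfloor>s/h\<rfloor> * h" using y assms by simp
qed

lemma orbit_right:
  assumes S: "C0_semigroup S" and t: "t \<ge> 0"
  shows "((\<lambda>w. S w x) \<longlongrightarrow> S t x) (at_right t)"
proof -
  have bl: "bounded_linear (S t)" using S t unfolding C0_semigroup_def by auto
  have lim0: "((\<lambda>v. S v x) \<longlongrightarrow> x) (at_right 0)" using S unfolding C0_semigroup_def by auto
  have "((\<lambda>v. S t (S v x)) \<longlongrightarrow> S t x) (at_right 0)"
    by (rule bounded_linear.tendsto[OF bl lim0])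
  moreover have "eventually (\<lambda>v. S t (S v x) = S (v + t) x) (at_right (0::real))"
    unfolding eventually_at_right_field
  proof (intro exI[of _ 1] conjI allI impI)
    fix v :: real assume "0 < v" "v < 1"
    then have "S (t + v) = S t \<circ> S v" using S t unfolding C0_semigroup_def by auto
    then show "S t (S v x) = S (v + t) x" by (simp add: add.commute)
  qed simp
  ultimately have "((\<lambda>v. S (v + t) x) \<longlongrightarrow> S t x) (at_right 0)"
    by (rule Lim_transform_eventually)
  then show ?thesis
    by (subst at_right_to_0) (simp add: filterlim_filtermap)
qed

lemma orbit_within:
  assumes S: "C0_semigroup S" and t: "t \<ge> 0"
  shows "continuous (at t within {t..}) (\<lambda>w. S w x)"
  unfolding continuous_within at_within_Ici_at_right using orbit_right[OF S t] .

lemma orbit_bounded: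
  assumes S: "C0_semigroup S"
  shows "\<exists>B. \<forall>w\<in>{0..c}. norm (S w x) \<le> B"
proof -
  have "eventually (\<lambda>w. dist (S w x) (S 0 x) < 1) (at_right 0)"
    using tendstoD[OF orbit_right[OF S, of 0 x] zero_less_one] by simp
  then obtain b where b: "b > 0" "\<And>w. 0 < w \<Longrightarrow> w < b \<Longrightarrow> dist (S w x) (S 0 x) < 1"
    unfolding eventually_at_right_field by auto
  have S0: "S 0 = id" using S unfolding C0_semigroup_def by auto
  define d where "d = b / 2"
  have d: "d > 0" "d < b" using b by (auto simp: d_def)
  have base: "\<forall>w\<in>{0..d}. norm (S w x) \<le> norm x + 1"
  proof
    fix w assume w: "w \<in> {0..d}"
    show "norm (S w x) \<le> norm x + 1"
    proof (cases "w = 0")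
      case True then show ?thesis using S0 by simp
    next
      case False
      then have "dist (S w x) x < 1" using b(2)[of w] w d S0 by auto
      then show ?thesis using norm_triangle_sub[of "S w x" x] by (simp add: dist_norm)
    qed
  qed
  have bld: "bounded_linear (S d)" using S d unfolding C0_semigroup_def by auto
  obtain K where K: "\<And>y. norm (S d y) \<le> norm y * K" "K > 0"
    using bounded_linear.pos_bounded[OF bld] by blast
  have "\<exists>B. \<forall>w\<in>{0..real n * d}. norm (S w x) \<le> B" for n
  proof (induction n)
    case 0 then show ?case using base d by auto
  next
    case (Suc n)
    then obtain B where B: "\<forall>w\<in>{0..real n * d}. norm (S w x) \<le> B" by auto
    show ?case
    proof (intro exI[of _ "max (norm x + 1) (K * B)"] ballI)
      fix w assume w: "w \<in> {0..real (Suc n) * d}"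
      show "norm (S w x) \<le> max (norm x + 1) (K * B)"
      proof (cases "w \<le> d")
        case True
        then have "norm (S w x) \<le> norm x + 1" using base w by auto
        then show ?thesis by linarith
      next
        case False
        then have "S w = S d \<circ> S (w - d)" using S d unfolding C0_semigroup_def
          by (metis add.commute diff_add_cancel diff_ge_0_iff_ge less_eq_real_def nle_le)
        then have "norm (S w x) \<le> norm (S (w - d) x) * K" using K by simp
        also have "\<dots> \<le> B * K"
          using B w False K by (intro mult_right_mono) (auto simp: algebra_simps)
        finally show ?thesis by (simp add: mult.commute)
      qed
    qed
  qed
  moreover obtain n :: nat where "c / d \<le> n" using real_arch_simple by blast
  then have "c \<le> real n * d" using d by (simp add: divide_le_eq)
  moreover obtain B where "\<forall>w\<in>{0..real n * d}. norm (S w x) \<le> B"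
    using calculation(1) by blast
  ultimately show ?thesis by (meson atLeastAtMost_iff order_trans)
qed

lemma q_tendsto:
  fixes u :: real assumes u: "u \<ge> 0"
  shows "(\<lambda>n::nat. real (nat \<lceil>u * 2^n\<rceil>) / 2^n) \<longlonglongrightarrow> u"
    and "\<And>n::nat. real (nat \<lceil>u * 2^n\<rceil>) / 2^n \<in> {u..}"
proof -
  have eq: "real (nat \<lceil>u * 2^n\<rceil>) = of_int \<lceil>u * 2^n\<rceil>" for n :: nat
    using u by simp
  have lo: "u \<le> real (nat \<lceil>u * 2^n\<rceil>) / 2^n" for n :: nat
  proof -
    have "u * 2^n \<le> of_int \<lceil>u * 2^n\<rceil>" by (rule le_of_int_ceiling)
    then show ?thesis unfolding eq by (simp add: le_divide_eq)
  qed
  have hi: "real (nat \<lceil>u * 2^n\<rceil>) / 2^n \<le> u + 1 / 2^n" for n :: nat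
  proof -
    have "of_int \<lceil>u * 2^n\<rceil> \<le> u * 2^n + 1" using ceiling_correct[of "u * 2^n"] by linarith
    then show ?thesis unfolding eq by (simp add: divide_le_eq distrib_right)
  qed
  show "\<And>n::nat. real (nat \<lceil>u * 2^n\<rceil>) / 2^n \<in> {u..}" using lo by simp
  have "(\<lambda>n::nat. u + 1 / 2^n) \<longlonglongrightarrow> u + 0"
    by (intro tendsto_add tendsto_const LIMSEQ_divide_realpow_zero) auto
  then have h: "(\<lambda>n::nat. u + 1 / 2^n) \<longlonglongrightarrow> u" by simp
  show "(\<lambda>n::nat. real (nat \<lceil>u * 2^n\<rceil>) / 2^n) \<longlonglongrightarrow> u"
    by (rule real_tendsto_sandwich[OF always_eventually always_eventually tendsto_const h])
       (use lo hi in auto)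
qed


lemma meas_S:
  assumes S: "C0_semigroup S" and g[measurable]: "g \<in> borel_measurable N"
    and v[measurable]: "v \<in> borel_measurable N"
  shows "(\<lambda>z. S (max 0 (g z)) (v z)) \<in> borel_measurable N"
proof (rule borel_measurable_LIMSEQ_metric)
  fix n :: nat
  have "(\<lambda>z. (\<lambda>k z. S (real k / 2^n) (v z)) (nat \<lceil>max 0 (g z) * 2^n\<rceil>) z) \<in> borel_measurable N"
  proof (rule measurable_compose_countable'[where I=UNIV and f="\<lambda>k z. S (real k / 2^n) (v z)" and g="\<lambda>z. nat \<lceil>max 0 (g z) * 2^n\<rceil>"])
    fix k :: nat assume "k \<in> UNIV"
    have "bounded_linear (S (real k / 2^n))" using S unfolding C0_semigroup_def by auto
    then have "continuous_on UNIV (S (real k / 2^n))" by (simp add: linear_continuous_on)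
    then show "(\<lambda>z. S (real k / 2^n) (v z)) \<in> borel_measurable N"
      using borel_measurable_continuous_on[OF _ v] by blast
  next
    have r: "(\<lambda>z. max 0 (g z) * 2^n) \<in> borel_measurable N"
      by (intro borel_measurable_times borel_measurable_max g borel_measurable_const)
    have c: "(\<lambda>z. \<lceil>max 0 (g z) * 2^n\<rceil>) \<in> measurable N (count_space UNIV)"
      by (rule measurable_compose[OF r measurable_real_ceiling])
    show "(\<lambda>z. nat \<lceil>max 0 (g z) * 2^n\<rceil>) \<in> measurable N (count_space UNIV)"
      by (rule measurable_compose[OF c measurable_count_space])
  qed simp
  then show "(\<lambda>z. S (real (nat \<lceil>max 0 (g z) * 2^n\<rceil>) / 2^n) (v z)) \<in> borel_measurable N" by simp
next
  fix z
  let ?u = "max 0 (g z)"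
  show "(\<lambda>n. S (real (nat \<lceil>max 0 (g z) * 2^n\<rceil>) / 2^n) (v z)) \<longlonglongrightarrow> S ?u (v z)"
    by (rule continuous_within_tendsto_compose'[OF orbit_within[OF S] q_tendsto(2) q_tendsto(1)]) simp_all
qed

lemma fl_nat:
  assumes h: "h > 0" and s: "s \<ge> 0"
  shows "floorh h s = real (nat \<lfloor>s/h\<rfloor>) * h" "real (nat \<lfloor>s/h\<rfloor>) * h \<le> s"
proof -
  have "\<lfloor>s/h\<rfloor> \<ge> 0" using h s by simp
  then have e: "real (nat \<lfloor>s/h\<rfloor>) = of_int \<lfloor>s/h\<rfloor>" by simp
  show "floorh h s = real (nat \<lfloor>s/h\<rfloor>) * h" unfolding e floorh_eq[OF h] ..
  have "of_int \<lfloor>s/h\<rfloor> \<le> s / h" by simp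
  then show "real (nat \<lfloor>s/h\<rfloor>) * h \<le> s" unfolding e using h by (simp add: le_divide_eq)
qed

lemma meas_fixed:
  fixes S :: "real \<Rightarrow> 'v::{banach, second_countable_topology} \<Rightarrow> 'v"
  assumes S: "C0_semigroup S" and h: "h > 0" and A[measurable]: "A \<in> sets borel" and At: "A \<subseteq> {0..t}"
  shows "(\<lambda>s. indicator A s *\<^sub>R S (t - s) (F (Y (floorh h s) \<omega>, Ou (floorh h s) \<omega>))) \<in> borel_measurable lborel"
proof -
  define xx where "xx k = F (Y (real k * h) \<omega>, Ou (real k * h) \<omega>)" for k :: nat
  have eq: "indicator A s *\<^sub>R S (t - s) (F (Y (floorh h s) \<omega>, Ou (floorh h s) \<omega>))
      = indicator A s *\<^sub>R S (max 0 (t - s)) (xx (nat \<lfloor>s/h\<rfloor>))" for s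
  proof (cases "s \<in> A")
    case True
    then have "0 \<le> s" "s \<le> t" using At by auto
    then show ?thesis using fl_nat[OF h] by (simp add: xx_def)
  qed simp
  have idx: "(\<lambda>s::real. nat \<lfloor>s/h\<rfloor>) \<in> measurable lborel (count_space UNIV)"
    by (rule measurable_compose[OF measurable_compose[OF _ measurable_real_floor] measurable_count_space]) simp
  have v: "(\<lambda>s::real. xx (nat \<lfloor>s/h\<rfloor>)) \<in> borel_measurable lborel"
    by (rule measurable_compose_countable'[where f="\<lambda>k s. xx k" and I=UNIV, OF _ idx]) auto
  have "(\<lambda>s. indicator A s *\<^sub>R S (max 0 (t - s)) (xx (nat \<lfloor>s/h\<rfloor>))) \<in> borel_measurable lborel"
  proof (rule borel_measurable_scaleR)
    show "(\<lambda>s. S (max 0 (t - s)) (xx (nat \<lfloor>s/h\<rfloor>))) \<in> borel_measurable lborel"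
      by (rule meas_S[OF S _ v]) simp
    show "indicator A \<in> borel_measurable lborel"
      by (rule borel_measurable_indicator) simp
  qed
  then show ?thesis unfolding eq .
qed

lemma meas_step:
  fixes M :: "'a measure"
    and S :: "real \<Rightarrow> 'v::{banach, second_countable_topology} \<Rightarrow> 'v"
    and Ou Y :: "real \<Rightarrow> 'a \<Rightarrow> 'v"
    and F :: "'v \<times> 'v \<Rightarrow> 'v"
  assumes S: "C0_semigroup S" and h: "h > 0" and t: "0 \<le> t" "t \<le> T"
    and Ou: "stoch_process M T Ou" and F[measurable]: "F \<in> borel_measurable borel"
    and Yeq: "\<forall>t\<in>{0..T}. \<forall>\<omega>\<in>space M.
           Y t \<omega> = (LINT s:{0..t}|lborel. S (t - s) (F (Y (floorh h s) \<omega>, Ou (floorh h s) \<omega>)))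
                    + Ou t \<omega>"
    and IH: "\<And>k::nat. real k * h < t \<Longrightarrow> Y (real k * h) \<in> borel_measurable M"
  shows "Y t \<in> borel_measurable M"
proof -
  define W where "W = (\<lambda>p::'a\<times>real. (\<lambda>k p. if real k * h < t then F (Y (real k * h) (fst p), Ou (real k * h) (fst p)) else 0) (nat \<lfloor>snd p / h\<rfloor>) p)"
  have W: "W \<in> borel_measurable (M \<Otimes>\<^sub>M lborel)"
    unfolding W_def
  proof (rule measurable_compose_countable'[where I=UNIV and g="\<lambda>p. nat \<lfloor>snd p / h\<rfloor>"
      and f="\<lambda>k p. if real k * h < t then F (Y (real k * h) (fst p), Ou (real k * h) (fst p)) else 0"])
    fix k :: nat assume "k \<in> UNIV"
    show "(\<lambda>p. if real k * h < t then F (Y (real k * h) (fst p), Ou (real k * h) (fst p)) else 0) \<in> borel_measurable (M \<Otimes>\<^sub>M lborel)"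
    proof (cases "real k * h < t")
      case True
      have [measurable]: "Y (real k * h) \<in> borel_measurable M" using IH True .
      have "real k * h \<in> {0..T}" using True t h by auto
      then have [measurable]: "Ou (real k * h) \<in> borel_measurable M" using Ou unfolding stoch_process_def by blast
      show ?thesis using True by simp measurable
    next
      case False then show ?thesis by simp
    qed
  next
    have "(\<lambda>p::'a\<times>real. snd p / h) \<in> borel_measurable (M \<Otimes>\<^sub>M lborel)" by measurable
    then show "(\<lambda>p::'a\<times>real. nat \<lfloor>snd p / h\<rfloor>) \<in> measurable (M \<Otimes>\<^sub>M lborel) (count_space UNIV)"
      by (rule measurable_compose[OF measurable_compose[OF _ measurable_real_floor] measurable_count_space])
  qed auto
  define H where "H \<omega> s = indicator {0..<t} s *\<^sub>R S (max 0 (t - s)) (W (\<omega>, s))" for \<omega> s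
  have Hm: "(\<lambda>p. indicator {0..<t} (snd p) *\<^sub>R S (max 0 (t - snd p)) (W p)) \<in> borel_measurable (M \<Otimes>\<^sub>M lborel)"
  proof (rule borel_measurable_scaleR)
    show "(\<lambda>p. S (max 0 (t - snd p)) (W p)) \<in> borel_measurable (M \<Otimes>\<^sub>M lborel)"
      by (rule meas_S[OF S _ W]) measurable
    show "(\<lambda>p. indicator {0..<t} (snd p)) \<in> borel_measurable (M \<Otimes>\<^sub>M lborel)"
      by measurable
  qed
  have "case_prod H = (\<lambda>p. indicator {0..<t} (snd p) *\<^sub>R S (max 0 (t - snd p)) (W p))"
    by (auto simp: H_def)
  with Hm have "case_prod H \<in> borel_measurable (M \<Otimes>\<^sub>M lborel)" by simp
  then have int_meas: "(\<lambda>\<omega>. \<integral>s. H \<omega> s \<partial>lborel) \<in> borel_measurable M"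
    by (rule lborel.borel_measurable_lebesgue_integral)
  have Hm1: "H \<omega> \<in> borel_measurable lborel" if True: "\<omega> \<in> space M" for \<omega>
  proof -
      have "(\<lambda>s. case_prod H (\<omega>, s)) \<in> borel_measurable lborel"
        by (rule measurable_compose[OF _ \<open>case_prod H \<in> _\<close>]) (use True in measurable)
      then show ?thesis by simp
  qed
  have eq: "Y t \<omega> = (\<integral>s. H \<omega> s \<partial>lborel) + Ou t \<omega>" if \<omega>: "\<omega> \<in> space M" for \<omega>
  proof -
    have "Y t \<omega> = (LINT s:{0..t}|lborel. S (t - s) (F (Y (floorh h s) \<omega>, Ou (floorh h s) \<omega>))) + Ou t \<omega>"
      using Yeq t \<omega> by auto
    also have "(LINT s:{0..t}|lborel. S (t - s) (F (Y (floorh h s) \<omega>, Ou (floorh h s) \<omega>)))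
        = (\<integral>s. H \<omega> s \<partial>lborel)"
      unfolding set_lebesgue_integral_def
    proof (rule integral_cong_AE)
      show "(\<lambda>s. indicator {0..t} s *\<^sub>R S (t - s) (F (Y (floorh h s) \<omega>, Ou (floorh h s) \<omega>))) \<in> borel_measurable lborel"
        by (rule meas_fixed[OF S h]) auto
      show "H \<omega> \<in> borel_measurable lborel" by (rule Hm1[OF \<omega>])
      show "AE s in lborel. indicator {0..t} s *\<^sub>R S (t - s) (F (Y (floorh h s) \<omega>, Ou (floorh h s) \<omega>)) = H \<omega> s"
        using AE_lborel_singleton[of t]
      proof (rule eventually_mono)
        fix s :: real assume "s \<noteq> t"
        show "indicator {0..t} s *\<^sub>R S (t - s) (F (Y (floorh h s) \<omega>, Ou (floorh h s) \<omega>)) = H \<omega> s"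
        proof (cases "0 \<le> s \<and> s < t")
          case True
          then have "real (nat \<lfloor>s/h\<rfloor>) * h < t" using fl_nat(2)[OF h, of s] by linarith
          then show ?thesis using True fl_nat(1)[OF h, of s] by (simp add: H_def W_def)
        next
          case False
          then show ?thesis using \<open>s \<noteq> t\<close> by (auto simp: H_def)
        qed
      qed
    qed
    finally show ?thesis .
  qed
  have Out: "Ou t \<in> borel_measurable M" using Ou t unfolding stoch_process_def by auto
  have "(\<lambda>\<omega>. (\<integral>s. H \<omega> s \<partial>lborel) + Ou t \<omega>) \<in> borel_measurable M"
    using int_meas Out by (rule borel_measurable_add)
  then show ?thesis using eq by (subst measurable_cong[where g="\<lambda>\<omega>. (\<integral>s. H \<omega> s \<partial>lborel) + Ou t \<omega>"]) auto
qed

lemma cont_part: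
  fixes S :: "real \<Rightarrow> 'v::{banach, second_countable_topology} \<Rightarrow> 'v"
    and G :: "real \<Rightarrow> 'v" and xx :: "nat \<Rightarrow> 'v"
  assumes S: "C0_semigroup S" and h: "h > 0" and t: "0 \<le> t" "t \<le> T"
    and G: "\<And>s. s \<ge> 0 \<Longrightarrow> G s = xx (nat \<lfloor>s/h\<rfloor>)"
  shows "((\<lambda>r. LINT s:{0..r}|lborel. S (r - s) (G s)) \<longlongrightarrow> (LINT s:{0..t}|lborel. S (t - s) (G s))) (at t within {t..T})"
proof -
  define N where "N = nat \<lfloor>T/h\<rfloor>"
  have "\<forall>k. \<exists>B. \<forall>u\<in>{0..T}. norm (S u (xx k)) \<le> B" using orbit_bounded[OF S] by blast
  then obtain Bf where Bf: "\<And>k u. u \<in> {0..T} \<Longrightarrow> norm (S u (xx k)) \<le> Bf k" by metis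
  define B where "B = (\<Sum>k\<le>N. \<bar>Bf k\<bar>)"
  have bnd: "norm (S u (G s)) \<le> B" if u: "u \<in> {0..T}" and s: "s \<in> {0..T}" for u s
  proof -
    have "nat \<lfloor>s/h\<rfloor> \<le> N" unfolding N_def using s h
      by (intro nat_mono floor_mono) (simp add: divide_right_mono)
    then have "\<bar>Bf (nat \<lfloor>s/h\<rfloor>)\<bar> \<le> B" unfolding B_def
      by (intro member_le_sum) auto
    moreover have "norm (S u (G s)) \<le> Bf (nat \<lfloor>s/h\<rfloor>)" using G[of s] s Bf[OF u] by simp
    ultimately show ?thesis by linarith
  qed
  have meas: "(\<lambda>s. indicator A s *\<^sub>R S (r - s) (G s)) \<in> borel_measurable lborel"
    if A: "A \<in> sets borel" "A \<subseteq> {0..r}" for A r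
  proof -
    have eq: "indicator A s *\<^sub>R S (r - s) (G s) = indicator A s *\<^sub>R S (max 0 (r - s)) (xx (nat \<lfloor>s/h\<rfloor>))" for s
    proof (cases "s \<in> A")
      case True
      then have "0 \<le> s" "s \<le> r" using A by auto
      then show ?thesis using G by simp
    qed simp
    have idx: "(\<lambda>s::real. nat \<lfloor>s/h\<rfloor>) \<in> measurable lborel (count_space UNIV)"
      by (rule measurable_compose[OF measurable_compose[OF _ measurable_real_floor] measurable_count_space]) simp
    have v: "(\<lambda>s::real. xx (nat \<lfloor>s/h\<rfloor>)) \<in> borel_measurable lborel"
      by (rule measurable_compose_countable'[where f="\<lambda>k s. xx k" and I=UNIV, OF _ idx]) auto
    have "(\<lambda>s. indicator A s *\<^sub>R S (max 0 (r - s)) (xx (nat \<lfloor>s/h\<rfloor>))) \<in> borel_measurable lborel"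
    proof (rule borel_measurable_scaleR)
      show "(\<lambda>s. S (max 0 (r - s)) (xx (nat \<lfloor>s/h\<rfloor>))) \<in> borel_measurable lborel"
        by (rule meas_S[OF S _ v]) simp
      show "indicator A \<in> borel_measurable lborel"
        by (rule borel_measurable_indicator) (simp add: A)
    qed
    then show ?thesis unfolding eq .
  qed
  have integ: "set_integrable lborel A (\<lambda>s. S (r - s) (G s))"
    if A: "A \<in> sets borel" "A \<subseteq> {0..r}" and r: "r \<in> {0..T}" for A r
    unfolding set_integrable_def
  proof (rule integrableI_bounded_set[where A=A and B=B])
    show "A \<in> sets lborel" using A by simp
    show "(\<lambda>s. indicator A s *\<^sub>R S (r - s) (G s)) \<in> borel_measurable lborel" by (rule meas[OF A])
    have "emeasure lborel A \<le> emeasure lborel {0..r}" using A by (intro emeasure_mono) auto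
    then show "emeasure lborel A < \<infinity>" using r by (auto simp: le_less_trans)
    show "AE s in lborel. s \<in> A \<longrightarrow> norm (indicator A s *\<^sub>R S (r - s) (G s)) \<le> B"
    proof (intro AE_I2 impI)
      fix s assume "s \<in> A"
      then have "s \<in> {0..r}" using A by auto
      then show "norm (indicator A s *\<^sub>R S (r - s) (G s)) \<le> B"
        using \<open>s \<in> A\<close> r by (auto intro!: bnd)
    qed
    show "AE s in lborel. s \<notin> A \<longrightarrow> indicator A s *\<^sub>R S (r - s) (G s) = 0" by simp
  qed
  define \<Phi> where "\<Phi> r = (LINT s:{0..r}|lborel. S (r - s) (G s))" for r
  define R where "R r = (LINT s:{t<..r}|lborel. S (r - s) (G s))" for r
  have split: "\<Phi> r = S (r - t) (\<Phi> t) + R r" if r: "t < r" "r \<le> T" for r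
  proof -
    have un: "{0..r} = {0..t} \<union> {t<..r}" using t r by auto
    have rT: "r \<in> {0..T}" using t r by auto
    have "\<Phi> r = (LINT s:{0..t}|lborel. S (r - s) (G s)) + R r"
      unfolding \<Phi>_def R_def un
    proof (rule set_integral_Un)
      have "{0..t} \<subseteq> {0..r}" "{t<..r} \<subseteq> {0..r}" using t r by auto
      then show "set_integrable lborel {0..t} (\<lambda>s. S (r - s) (G s))"
        "set_integrable lborel {t<..r} (\<lambda>s. S (r - s) (G s))"
        by (auto intro!: integ[OF _ _ rT])
    qed auto
    also have "(LINT s:{0..t}|lborel. S (r - s) (G s)) = (LINT s:{0..t}|lborel. S (r - t) (S (t - s) (G s)))"
    proof (rule set_lebesgue_integral_cong)
      show "\<forall>s. s \<in> {0..t} \<longrightarrow> S (r - s) (G s) = S (r - t) (S (t - s) (G s))"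
      proof (intro allI impI)
        fix s assume s: "s \<in> {0..t}"
        have sg: "\<forall>a\<ge>0. \<forall>b\<ge>0. S (a + b) = S a \<circ> S b" using S unfolding C0_semigroup_def by auto
        have "S ((r - t) + (t - s)) = S (r - t) \<circ> S (t - s)"
          using sg[rule_format, of "r - t" "t - s"] s r by simp
        then show "S (r - s) (G s) = S (r - t) (S (t - s) (G s))" by simp
      qed
    qed simp
    also have "\<dots> = S (r - t) (\<Phi> t)"
    proof -
      have bl: "bounded_linear (S (r - t))" using S r unfolding C0_semigroup_def by auto
      have "(\<lambda>s. indicator {0..t} s *\<^sub>R S (r - t) (S (t - s) (G s))) = (\<lambda>s. S (r - t) (indicator {0..t} s *\<^sub>R S (t - s) (G s)))"
        using linear_scale[OF bounded_linear.linear[OF bl]] by auto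
      moreover have "integrable lborel (\<lambda>s. indicator {0..t} s *\<^sub>R S (t - s) (G s))"
        using integ[of "{0..t}" t] t unfolding set_integrable_def by auto
      ultimately show ?thesis unfolding set_lebesgue_integral_def \<Phi>_def
        by (simp add: integral_bounded_linear[OF bl])
    qed
    finally show ?thesis .
  qed
  have Rbnd: "norm (R r) \<le> B * (r - t)" if r: "t < r" "r \<le> T" for r
  proof -
    have rT: "r \<in> {0..T}" using t r by auto
    have i: "set_integrable lborel {t<..r} (\<lambda>s. S (r - s) (G s))" by (rule integ[OF _ _ rT]) (use t in auto)
    have "norm (R r) \<le> (LINT s:{t<..r}|lborel. norm (S (r - s) (G s)))"
      unfolding R_def by (rule set_integral_norm_bound[OF i])
    also have "\<dots> \<le> (LINT s:{t<..r}|lborel. B)"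
    proof (rule set_integral_mono)
      show "set_integrable lborel {t<..r} (\<lambda>s. norm (S (r - s) (G s)))" by (rule set_integrable_norm[OF i])
      show "set_integrable lborel {t<..r} (\<lambda>s. B)"
        unfolding set_integrable_def using r by (intro integrable_scaleR_left integrable_real_indicator) auto
      fix s assume "s \<in> {t<..r}"
      then show "norm (S (r - s) (G s)) \<le> B" using t r by (intro bnd) auto
    qed
    also have "\<dots> = measure lborel {t<..r} *\<^sub>R B" using r by (intro set_integral_const) auto
    also have "\<dots> = B * (r - t)" using r by simp
    finally show ?thesis .
  qed
  have lim1: "((\<lambda>r. S (r - t) (\<Phi> t)) \<longlongrightarrow> \<Phi> t) (at t within {t..T})"
  proof -
    have S0: "S 0 (\<Phi> t) = \<Phi> t" using S unfolding C0_semigroup_def by simp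
    have o: "((\<lambda>w. S w (\<Phi> t)) \<longlongrightarrow> \<Phi> t) (at_right 0)" using orbit_right[OF S, of 0 "\<Phi> t"] S0 by simp
    have f: "filterlim (\<lambda>r. r - t) (at_right 0) (at t within {t..T})"
      unfolding filterlim_at
    proof
      show "\<forall>\<^sub>F r in at t within {t..T}. r - t \<in> {0<..} \<and> r - t \<noteq> 0"
        unfolding eventually_at_filter by (auto intro!: always_eventually)
      have "((\<lambda>r. r - t) \<longlongrightarrow> t - t) (at t within {t..T})" by (intro tendsto_intros)
      then show "((\<lambda>r. r - t) \<longlongrightarrow> 0) (at t within {t..T})" by simp
    qed
    show ?thesis by (rule filterlim_compose[OF o f])
  qed
  have lim2: "(R \<longlongrightarrow> 0) (at t within {t..T})"
  proof (rule Lim_null_comparison)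
    show "\<forall>\<^sub>F r in at t within {t..T}. norm (R r) \<le> B * (r - t)"
      unfolding eventually_at_filter by (auto intro!: always_eventually Rbnd)
    have "((\<lambda>r. B * (r - t)) \<longlongrightarrow> B * (t - t)) (at t within {t..T})" by (intro tendsto_intros)
    then show "((\<lambda>r. B * (r - t)) \<longlongrightarrow> 0) (at t within {t..T})" by simp
  qed
  have "((\<lambda>r. S (r - t) (\<Phi> t) + R r) \<longlongrightarrow> \<Phi> t + 0) (at t within {t..T})"
    by (rule tendsto_add[OF lim1 lim2])
  then have "((\<lambda>r. S (r - t) (\<Phi> t) + R r) \<longlongrightarrow> \<Phi> t) (at t within {t..T})" by simp
  moreover have "\<forall>\<^sub>F r in at t within {t..T}. S (r - t) (\<Phi> t) + R r = \<Phi> r"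
    unfolding eventually_at_filter by (auto intro!: always_eventually split[symmetric])
  ultimately have "(\<Phi> \<longlongrightarrow> \<Phi> t) (at t within {t..T})" by (rule Lim_transform_eventually)
  then show ?thesis unfolding \<Phi>_def .
qed

theorem lemma2p3:
  fixes M :: "'a measure"
    and S :: "real \<Rightarrow> 'v::{banach, second_countable_topology} \<Rightarrow> 'v"
    and Ou Y :: "real \<Rightarrow> 'a \<Rightarrow> 'v"
    and F :: "'v \<times> 'v \<Rightarrow> 'v"
    and T h :: real
  assumes "prob_space M"
    and "C0_semigroup S"
    and "stoch_process M T Ou"
    and "T > 0" and "h > 0"
    and "F \<in> borel_measurable borel"
    and "\<forall>t\<in>{0..T}. \<forall>\<omega>\<in>space M.
           Y t \<omega> = (LINT s:{0..t}|lborel. S (t - s) (F (Y (floorh h s) \<omega>, Ou (floorh h s) \<omega>)))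
                    + Ou t \<omega>"
  shows "stoch_process M T Y \<and>
         stoch_process M T (\<lambda>t \<omega>. Y t \<omega> - Ou t \<omega>) \<and>
         (\<forall>\<omega>\<in>space M. \<forall>t\<in>{0..T}. continuous (at t within {t..T}) (\<lambda>s. Y s \<omega> - Ou s \<omega>))"
proof -
  have S: "C0_semigroup S" and Ou: "stoch_process M T Ou" and h: "h > 0" and T: "T > 0"
    and F: "F \<in> borel_measurable borel" using assms by auto
  note Yeq = assms(7)
  have ind: "\<forall>t\<in>{0..T}. t \<le> real n * h \<longrightarrow> Y t \<in> borel_measurable M" for n :: nat
  proof (induction n)
    case 0
    show ?case
    proof (intro ballI impI)
      fix t assume t: "t \<in> {0..T}" "t \<le> real 0 * h"
      show "Y t \<in> borel_measurable M"
      proof (rule meas_step[OF S h _ _ Ou F Yeq])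
        fix k :: nat assume "real k * h < t"
        with t h have False by (simp add: not_less) (smt (verit) mult_nonneg_nonneg of_nat_0_le_iff)
        then show "Y (real k * h) \<in> borel_measurable M" ..
      qed (use t in auto)
    qed
  next
    case (Suc n)
    show ?case
    proof (intro ballI impI)
      fix t assume t: "t \<in> {0..T}" "t \<le> real (Suc n) * h"
      show "Y t \<in> borel_measurable M"
      proof (rule meas_step[OF S h _ _ Ou F Yeq])
        fix k :: nat assume k: "real k * h < t"
        then have "real k * h < real (Suc n) * h" using t by linarith
        then have "k < Suc n" using h by (simp add: mult_less_cancel_right)
        then have "real k * h \<le> real n * h" using h by (intro mult_right_mono) auto
        moreover have "real k * h \<in> {0..T}" using k t h by auto
        ultimately show "Y (real k * h) \<in> borel_measurable M" using Suc.IH by blast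
      qed (use t in auto)
    qed
  qed
  have Ym: "Y t \<in> borel_measurable M" if t: "t \<in> {0..T}" for t
  proof -
    obtain n :: nat where "t / h \<le> n" using real_arch_simple by blast
    then have "t \<le> real n * h" using h by (simp add: divide_le_eq)
    then show ?thesis using ind t by blast
  qed
  have P1: "stoch_process M T Y" unfolding stoch_process_def using Ym by blast
  have P2: "stoch_process M T (\<lambda>t \<omega>. Y t \<omega> - Ou t \<omega>)"
    unfolding stoch_process_def
  proof
    fix t assume t: "t \<in> {0..T}"
    have "Ou t \<in> borel_measurable M" using Ou t unfolding stoch_process_def by blast
    then show "(\<lambda>\<omega>. Y t \<omega> - Ou t \<omega>) \<in> borel_measurable M" using Ym[OF t] by (intro borel_measurable_diff)
  qed
  have P3: "continuous (at t within {t..T}) (\<lambda>s. Y s \<omega> - Ou s \<omega>)"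
    if \<omega>: "\<omega> \<in> space M" and t: "t \<in> {0..T}" for \<omega> t
  proof -
    define G where "G s = F (Y (floorh h s) \<omega>, Ou (floorh h s) \<omega>)" for s
    define xx where "xx k = F (Y (real k * h) \<omega>, Ou (real k * h) \<omega>)" for k :: nat
    have G: "G s = xx (nat \<lfloor>s/h\<rfloor>)" if "s \<ge> 0" for s
      using fl_nat(1)[OF h that] by (simp add: G_def xx_def)
    have lim: "((\<lambda>r. LINT s:{0..r}|lborel. S (r - s) (G s)) \<longlongrightarrow> (LINT s:{0..t}|lborel. S (t - s) (G s))) (at t within {t..T})"
      using t by (intro cont_part[OF S h, where G=G and xx=xx] G) auto
    have eqr: "Y r \<omega> - Ou r \<omega> = (LINT s:{0..r}|lborel. S (r - s) (G s))" if "r \<in> {0..T}" for r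
      using Yeq that \<omega> by (simp add: G_def)
    have "\<forall>\<^sub>F r in at t within {t..T}. (LINT s:{0..r}|lborel. S (r - s) (G s)) = Y r \<omega> - Ou r \<omega>"
      unfolding eventually_at_filter using t by (auto intro!: always_eventually eqr[symmetric])
    from Lim_transform_eventually[OF lim this]
    show ?thesis unfolding continuous_within using eqr[OF t] by simp
  qed
  show ?thesis using P1 P2 P3 by blast
qed

end
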